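(* Let $\kappa:\mathbb{R}^2\to[0,\infty]$ be a normalized surface density (a gravitational lens) satisfying the conditions listed in the context. Then $\kappa(x)<\kappa(0)$ for all $x>0$, where for a singular lens $\kappa(0)=+\infty$.
   Context: A gravitational lens (in a single lens plane) is given by a normalized surface density $\kappa$ on the plane $\mathbb{R}^2$ satisfying: (i) Continuity: $\kappa:\mathbb{R}^2\to\mathbb{R}_0^+=[0,\infty)$ is continuous, except possibly at the origin for singular lenses. (ii) Circular symmetry: $\kappa$ depends only on the radius $x=\|\mathbf{x}\|$; write $\kappa=\kappa(x)$. (iii) Finiteness: $\kappa(x)<\infty$ for $x>0$; $\kappa(0)=1/C_1$ for a constant $C_1\ge 0$ (so $\kappa(0)=+\infty$ when $C_1=0$); and $\lim_{x\to\infty}\kappa(x)\,x=C_2$ for a constant $0\le C_2<\infty$. (iv) Self-gravitation: $\kappa(x)<\bar\kappa(x)$ for $x>0$, where $\bar\kappa(x)=\frac{2}{x^2}\int_0^x\kappa(t)\,t\,dt$ is the mean surface density inside radius $x$. The lens is called singular if and only if $C_1=0$, and non-singular otherwise. *)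

theory Defs
  imports "HOL-Analysis.Analysis"
begin

text \<open>A circularly symmetric lens is represented by its radial profile
  k :: real => real (k x = kappa at radius x, for x > 0) together with the
  constants C1, C2.  The central value kappa(0) = 1/C1 is an extended real,
  equal to +infinity when C1 = 0 (singular lens).\<close>

definition kappa0 :: "real \<Rightarrow> ereal" where
  "kappa0 C1 = (if C1 = 0 then \<infinity> else ereal (1 / C1))"

definition mean_density :: "(real \<Rightarrow> real) \<Rightarrow> real \<Rightarrow> real" where
  "mean_density k x = 2 / x\<^sup>2 * integral {0..x} (\<lambda>t. k t * t)"

definition is_lens :: "(real \<Rightarrow> real) \<Rightarrow> real \<Rightarrow> real \<Rightarrow> bool" where
  "is_lens k C1 C2 \<longleftrightarrow>
     \<comment> \<open>nonnegative and finite away from the origin\<close>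
     (\<forall>x>0. 0 \<le> k x) \<and>
     \<comment> \<open>(i) continuity away from the origin\<close>
     continuous_on {0<..} k \<and>
     \<comment> \<open>(i)+(iii) non-singular lenses are continuous at the origin, kappa(0) = 1/C1\<close>
     (C1 \<noteq> 0 \<longrightarrow> (k \<longlongrightarrow> 1 / C1) (at_right 0)) \<and>
     \<comment> \<open>(iii) constants\<close>
     0 \<le> C1 \<and> 0 \<le> C2 \<and>
     ((\<lambda>x. k x * x) \<longlongrightarrow> C2) at_top \<and>
     \<comment> \<open>the mean density is well defined\<close>
     (\<forall>x>0. (\<lambda>t. k t * t) integrable_on {0..x}) \<and>
     \<comment> \<open>(iv) self-gravitation\<close>
     (\<forall>x>0. k x < mean_density k x)"

end

theory Submission
  imports Defs
begin

lemma lin_int: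
  fixes M y :: real assumes "0 \<le> y"
  shows "((\<lambda>t. M * t) has_integral M * y\<^sup>2 / 2) {0..y}"
proof -
  have "((\<lambda>t. M * t) has_integral (M * y\<^sup>2 / 2 - M * 0\<^sup>2 / 2)) {0..y}"
    apply (rule fundamental_theorem_of_calculus[OF assms])
    apply (auto intro!: derivative_eq_intros simp: has_real_derivative_iff_has_vector_derivative[symmetric])
    done
  then show ?thesis by simp
qed

theorem lemma1:
  fixes k :: "real \<Rightarrow> real" and C1 C2 x :: real
  assumes "is_lens k C1 C2" and "x > 0"
  shows "ereal (k x) < kappa0 C1"
proof (cases "C1 = 0")
  case True then show ?thesis by (simp add: kappa0_def)
next
  case False
  note L = assms(1)[unfolded is_lens_def]
  define c where "c = 1 / C1"
  have lim: "(k \<longlongrightarrow> c) (at_right 0)" using L False c_def by blast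
  have cont: "continuous_on {0<..} k" using L by blast
  define g where "g t = (if t = 0 then c else k t)" for t
  have gc: "continuous_on {0..x} g"
    unfolding continuous_on_eq_continuous_within
  proof
    fix t assume t: "t \<in> {0..x}"
    show "continuous (at t within {0..x}) g"
    proof (cases "t = 0")
      case True
      have ev: "\<forall>\<^sub>F s in at_right 0. k s = g s"
        by (auto simp: g_def eventually_at_filter)
      have "(g \<longlongrightarrow> c) (at_right 0)" using tendsto_cong[OF ev] lim by simp
      then have "(g \<longlongrightarrow> g 0) (at_right 0)" by (simp add: g_def)
      then show ?thesis using True assms(2)
        by (simp add: continuous_within at_within_Icc_at_right)
    next
      case False
      then have tp: "t > 0" using t by auto
      have "isCont k t" using cont tp by (simp add: continuous_on_eq_continuous_at)
      moreover have "eventually (\<lambda>s. k s = g s) (nhds t)"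
      proof -
        have "eventually (\<lambda>s. s \<in> {0<..}) (nhds t)"
          using tp by (intro eventually_nhds_in_open) auto
        then show ?thesis by eventually_elim (auto simp: g_def)
      qed
      ultimately have "isCont g t" using isCont_cong by blast
      then show ?thesis using continuous_at_imp_continuous_at_within by blast
    qed
  qed
  obtain y where y: "y \<in> {0..x}" and ymax: "\<forall>s\<in>{0..x}. g s \<le> g y"
    using continuous_attains_sup[OF compact_Icc _ gc] assms(2) by auto
  have nomax: False if y: "y \<in> {0..x}" and yp: "y > 0" and ymax: "\<forall>s\<in>{0..x}. g s \<le> g y" for y
  proof -
    define M where "M = g y"
    have ky: "k y = M" using yp by (simp add: M_def g_def)
    have int1: "(\<lambda>t. k t * t) integrable_on {0..y}" using L yp by blast
    have "integral {0..y} (\<lambda>t. k t * t) \<le> integral {0..y} (\<lambda>t. M * t)"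
    proof (rule integral_le[OF int1])
      show "(\<lambda>t. M * t) integrable_on {0..y}" using lin_int yp by (metis less_imp_le has_integral_integrable)
      fix s assume s: "s \<in> {0..y}"
        show "k s * s \<le> M * s"
        proof (cases "s = 0")
          case False
          then have "k s = g s" by (simp add: g_def)
          also have "\<dots> \<le> M" using ymax s y M_def by auto
          finally show ?thesis using s by (simp add: mult_right_mono)
        qed simp
    qed
    also have "\<dots> = M * y\<^sup>2 / 2" using lin_int yp by (meson integral_unique less_imp_le)
    finally have "mean_density k y \<le> M"
      using yp by (simp add: mean_density_def field_simps)
    moreover have "k y < mean_density k y" using L yp by blast
    ultimately show False using ky by simp
  qed
  have "y = 0" using nomax[OF y _ ymax] y by force
  have "g x \<le> g y" using ymax assms(2) by auto
  then have "k x \<le> c" using assms(2) \<open>y = 0\<close> by (simp add: g_def)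
  moreover have "k x \<noteq> c"
  proof
    assume "k x = c"
    have "\<forall>s\<in>{0..x}. g s \<le> g x" using ymax \<open>y=0\<close> \<open>k x = c\<close> assms(2) by (simp add: g_def)
    then show False using nomax[of x] assms(2) by auto
  qed
  ultimately have "k x < c" by simp
  then show ?thesis using False by (simp add: kappa0_def c_def)
qed

end
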